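(* Let $H \in \mathcal{M}_n(\mathbb{C})$ be a Hermitian matrix whose largest eigenvalue (spectral radius) is simple. Then $H$ has exactly $k$ distinct eigenvalues, where $2 \le k \le n$, if and only if there are $k$ distinct real numbers $\lambda_1, \lambda_2, \ldots, \lambda_k$ such that (i) $H - \lambda_i I$ is a singular matrix for every $2 \le i \le k$; and (ii) $\prod_{i=2}^{k}(H - \lambda_i I) = b\,\mathbf{y}\mathbf{y}^\ast$ and $H\mathbf{y} = \lambda_1 \mathbf{y}$ for some $b \in \mathbb{C}\setminus\{0\}$ and some $\mathbf{y} \in \mathbb{C}^n \setminus \{\mathbf{0}\}$. Moreover, in this case $\lambda_1, \lambda_2, \ldots, \lambda_k$ are exactly the $k$ distinct eigenvalues of $H$.
   Context: $\mathcal{M}_n(\mathbb{C})$ is the set of $n\times n$ complex matrices, $I$ the identity matrix, $\mathbf{y}^\ast = \overline{\mathbf{y}}^T$. The spectral radius of a Hermitian matrix here means its largest eigenvalue; it is simple if its algebraic multiplicity is $1$. *)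

theory Defs
  imports "Jordan_Normal_Form.Schur_Decomposition"
begin

definition hermitian_mat :: "nat \<Rightarrow> complex mat \<Rightarrow> bool" where
  "hermitian_mat n H \<longleftrightarrow> H \<in> carrier_mat n n \<and> mat_adjoint H = H"

definition largest_eigenvalue_simple :: "complex mat \<Rightarrow> bool" where
  "largest_eigenvalue_simple H \<longleftrightarrow>
     (\<exists>r::real. eigenvalue H (complex_of_real r)
        \<and> (\<forall>\<mu>. eigenvalue H \<mu> \<longrightarrow> Re \<mu> \<le> r)
        \<and> Polynomial.order (complex_of_real r) (char_poly H) = 1)"

definition outer_adj :: "complex vec \<Rightarrow> complex mat" where
  "outer_adj y = mat (dim_vec y) (dim_vec y) (\<lambda>(i,j). y $ i * cnj (y $ j))"

definition shifted_prod :: "nat \<Rightarrow> complex mat \<Rightarrow> (nat \<Rightarrow> real) \<Rightarrow> nat \<Rightarrow> complex mat" where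
  "shifted_prod n H lam k =
     foldr (\<lambda>i M. (H - complex_of_real (lam i) \<cdot>\<^sub>m 1\<^sub>m n) * M) [2..<Suc k] (1\<^sub>m n)"

definition eig_conditions :: "nat \<Rightarrow> complex mat \<Rightarrow> nat \<Rightarrow> (nat \<Rightarrow> real) \<Rightarrow> bool" where
  "eig_conditions n H k lam \<longleftrightarrow>
     inj_on lam {1..k}
     \<and> (\<forall>i\<in>{2..k}. det (H - complex_of_real (lam i) \<cdot>\<^sub>m 1\<^sub>m n) = 0)
     \<and> (\<exists>b y. b \<noteq> 0 \<and> y \<in> carrier_vec n \<and> y \<noteq> 0\<^sub>v n
          \<and> shifted_prod n H lam k = b \<cdot>\<^sub>m outer_adj y
          \<and> H *\<^sub>v y = complex_of_real (lam 1) \<cdot>\<^sub>v y)"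

end

theory Submission
  imports Defs "Jordan_Normal_Form.Jordan_Normal_Form_Uniqueness" "Jordan_Normal_Form.Jordan_Normal_Form_Existence"
begin

definition herm_ent :: "nat \<Rightarrow> complex mat \<Rightarrow> bool" where
  "herm_ent n A \<longleftrightarrow> A \<in> carrier_mat n n \<and> (\<forall>i<n. \<forall>j<n. A $$ (i,j) = cnj (A $$ (j,i)))"

lemma herm_entry: assumes "hermitian_mat n H" "i < n" "j < n"
  shows "H $$ (i,j) = cnj (H $$ (j,i))"
proof -
  have H: "H \<in> carrier_mat n n" "mat_adjoint H = H" using assms(1) by (auto simp: hermitian_mat_def)
  have "mat_adjoint H $$ (i,j) = cnj (H $$ (j,i))" using H(1) assms(2,3) unfolding mat_adjoint_def
    by (simp add: mat_of_rows_def)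
  thus ?thesis using H(2) by simp
qed

lemma herm_ent_herm: assumes "hermitian_mat n H" shows "herm_ent n H"
  unfolding herm_ent_def
proof (intro conjI allI impI)
  show "H \<in> carrier_mat n n" using assms unfolding hermitian_mat_def by blast
  fix i j assume "i < n" "j < n"
  thus "H $$ (i,j) = cnj (H $$ (j,i))" by (rule herm_entry[OF assms])
qed

lemma herm_entD: "herm_ent n A \<Longrightarrow> i < n \<Longrightarrow> j < n \<Longrightarrow> A $$ (i,j) = cnj (A $$ (j,i))"
  unfolding herm_ent_def by blast

lemma herm_entC: "herm_ent n A \<Longrightarrow> A \<in> carrier_mat n n"
  unfolding herm_ent_def by blast

lemma herm_sprod: assumes "herm_ent n H" "v \<in> carrier_vec n" "w \<in> carrier_vec n"
  shows "(H *\<^sub>v v) \<bullet>c w = v \<bullet>c (H *\<^sub>v w)"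
proof -
  have H: "H \<in> carrier_mat n n" using herm_entC[OF assms(1)] .
  have "(H *\<^sub>v v) \<bullet>c w = (\<Sum>i<n. (\<Sum>j<n. H $$ (i,j) * v $ j) * cnj (w $ i))"
    using H assms by (simp add: scalar_prod_def mult_mat_vec_def row_def lessThan_atLeast0)
  also have "\<dots> = (\<Sum>i<n. \<Sum>j<n. v $ j * (cnj (H $$ (j,i)) * cnj (w $ i)))"
  proof (intro sum.cong refl)
    fix i assume i: "i \<in> {..<n}"
    have eq: "H $$ (i,j) * v $ j * cnj (w $ i) = v $ j * (cnj (H $$ (j,i)) * cnj (w $ i))"
      if j: "j \<in> {..<n}" for j
    proof -
      have "H $$ (i,j) = cnj (H $$ (j,i))" using herm_entD[OF assms(1)] i j by blast
      thus ?thesis by (simp add: ac_simps)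
    qed
    have "(\<Sum>j<n. H $$ (i,j) * v $ j) * cnj (w $ i) = (\<Sum>j<n. H $$ (i,j) * v $ j * cnj (w $ i))"
      by (simp add: sum_distrib_right)
    also have "\<dots> = (\<Sum>j<n. v $ j * (cnj (H $$ (j,i)) * cnj (w $ i)))"
      using eq by (intro sum.cong) auto
    finally show "(\<Sum>j<n. H $$ (i,j) * v $ j) * cnj (w $ i) = (\<Sum>j<n. v $ j * (cnj (H $$ (j,i)) * cnj (w $ i)))" .
  qed
  also have "\<dots> = (\<Sum>j<n. \<Sum>i<n. v $ j * (cnj (H $$ (j,i)) * cnj (w $ i)))"
    by (rule sum.swap)
  also have "\<dots> = (\<Sum>j<n. v $ j * cnj (\<Sum>i<n. H $$ (j,i) * w $ i))"
    by (simp add: sum_distrib_left)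
  also have "\<dots> = v \<bullet>c (H *\<^sub>v w)"
    using H assms by (simp add: scalar_prod_def mult_mat_vec_def row_def lessThan_atLeast0)
  finally show ?thesis .
qed

lemma herm_eigenvalue_real: assumes "hermitian_mat n H" "eigenvalue H \<mu>"
  shows "\<mu> = complex_of_real (Re \<mu>)"
proof -
  have H: "H \<in> carrier_mat n n" using assms(1) by (auto simp: hermitian_mat_def)
  obtain v where v: "v \<in> carrier_vec n" "v \<noteq> 0\<^sub>v n" "H *\<^sub>v v = \<mu> \<cdot>\<^sub>v v"
    using assms(2) H unfolding eigenvalue_def eigenvector_def by auto
  have nz: "v \<bullet>c v \<noteq> 0" using v by simp
  have "\<mu> * (v \<bullet>c v) = (H *\<^sub>v v) \<bullet>c v" using v by simp
  also have "\<dots> = v \<bullet>c (H *\<^sub>v v)" by (rule herm_sprod[OF herm_ent_herm[OF assms(1)] v(1) v(1)])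
  also have "\<dots> = cnj \<mu> * (v \<bullet>c v)" using v
    by (simp add: conjugate_smult_vec)
  finally have "\<mu> * (v \<bullet>c v) = cnj \<mu> * (v \<bullet>c v)" .
  hence "\<mu> = cnj \<mu>" using nz mult_right_cancel by blast
  hence "Im \<mu> = Im (cnj \<mu>)" by simp
  hence "Im \<mu> = 0" by simp
  thus ?thesis by (simp add: complex_eq_iff)
qed

definition sp :: "nat \<Rightarrow> complex mat \<Rightarrow> (nat \<Rightarrow> complex) \<Rightarrow> nat list \<Rightarrow> complex mat" where
  "sp n H c xs = foldr (\<lambda>i M. (H - c i \<cdot>\<^sub>m 1\<^sub>m n) * M) xs (1\<^sub>m n)"

lemma shifted_prod_sp: "shifted_prod n H lam k = sp n H (\<lambda>i. complex_of_real (lam i)) [2..<Suc k]"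
  unfolding shifted_prod_def sp_def by simp

lemma sp_Cons: "sp n H c (a # xs) = (H - c a \<cdot>\<^sub>m 1\<^sub>m n) * sp n H c xs"
  unfolding sp_def by simp

lemma sp_Nil: "sp n H c [] = 1\<^sub>m n"
  unfolding sp_def by simp

lemma sp_carrier: "H \<in> carrier_mat n n \<Longrightarrow> sp n H c xs \<in> carrier_mat n n"
  by (induct xs) (auto simp: sp_Cons sp_Nil)

lemma smult_mat_vec: "A \<in> carrier_mat nr nc \<Longrightarrow> v \<in> carrier_vec nc \<Longrightarrow> (b \<cdot>\<^sub>m A) *\<^sub>v v = (b::complex) \<cdot>\<^sub>v (A *\<^sub>v v)"
  by (intro eq_vecI) (auto simp: scalar_prod_def sum_distrib_left mult.assoc)

lemma outer_adj_carrier: "y \<in> carrier_vec n \<Longrightarrow> outer_adj y \<in> carrier_mat n n"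
  unfolding outer_adj_def by auto

lemma shift_apply: assumes H: "(H :: complex mat) \<in> carrier_mat n n" and v: "v \<in> carrier_vec n"
  and ev: "H *\<^sub>v v = \<mu> \<cdot>\<^sub>v v"
  shows "(H - a \<cdot>\<^sub>m 1\<^sub>m n) *\<^sub>v v = (\<mu> - a) \<cdot>\<^sub>v v"
proof -
  have "(H - a \<cdot>\<^sub>m 1\<^sub>m n) *\<^sub>v v = H *\<^sub>v v - (a \<cdot>\<^sub>m 1\<^sub>m n) *\<^sub>v v"
    using H v by (intro minus_mult_distrib_mat_vec[of _ n n]) auto
  also have "(a \<cdot>\<^sub>m 1\<^sub>m n) *\<^sub>v v = a \<cdot>\<^sub>v v" using v by (simp add: smult_mat_vec[of _ n n])
  also have "H *\<^sub>v v - a \<cdot>\<^sub>v v = (\<mu> - a) \<cdot>\<^sub>v v" unfolding ev using v H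
    by (intro eq_vecI) (auto simp: algebra_simps)
  finally show ?thesis .
qed

lemma sp_apply: assumes H: "H \<in> carrier_mat n n" and v: "v \<in> carrier_vec n"
  and ev: "H *\<^sub>v v = \<mu> \<cdot>\<^sub>v v"
  shows "sp n H c xs *\<^sub>v v = (\<Prod>i\<leftarrow>xs. \<mu> - c i) \<cdot>\<^sub>v v"
proof (induct xs)
  case Nil
  then show ?case using v by (simp add: sp_Nil)
next
  case (Cons a xs)
  have "sp n H c (a # xs) *\<^sub>v v = (H - c a \<cdot>\<^sub>m 1\<^sub>m n) *\<^sub>v (sp n H c xs *\<^sub>v v)"
    unfolding sp_Cons using H v sp_carrier[OF H] by (subst assoc_mult_mat_vec[of _ n n _ n]) auto
  also have "\<dots> = (\<Prod>i\<leftarrow>xs. \<mu> - c i) \<cdot>\<^sub>v ((H - c a \<cdot>\<^sub>m 1\<^sub>m n) *\<^sub>v v)"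
    unfolding Cons using H v by (subst mult_mat_vec[of _ n n]) auto
  also have "\<dots> = (\<Prod>i\<leftarrow>a # xs. \<mu> - c i) \<cdot>\<^sub>v v"
    unfolding shift_apply[OF H v ev] by (simp add: smult_smult_assoc ac_simps)
  finally show ?case .
qed

lemma smult_vec_cancel: assumes v: "v \<in> carrier_vec n" "v \<noteq> 0\<^sub>v n"
  and eq: "a \<cdot>\<^sub>v v = b \<cdot>\<^sub>v v" shows "a = (b::complex)"
proof -
  have "\<exists>i<n. v $ i \<noteq> 0"
  proof (rule ccontr)
    assume "\<not> ?thesis"
    hence "v = 0\<^sub>v n" using v(1) by (intro eq_vecI) auto
    thus False using v(2) by simp
  qed
  then obtain i where i: "i < n" "v $ i \<noteq> 0" by blast
  have "a * v $ i = b * v $ i" using arg_cong[OF eq, of "\<lambda>x. x $ i"] i v by simp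
  thus ?thesis using i by simp
qed

lemma outer_adj_apply: assumes y: "y \<in> carrier_vec n" and v: "v \<in> carrier_vec n"
  shows "outer_adj y *\<^sub>v v = (v \<bullet>c y) \<cdot>\<^sub>v y"
  using y v by (intro eq_vecI) (auto simp: outer_adj_def scalar_prod_def sum_distrib_left ac_simps)

lemma eigenvalue_shift: assumes H: "(H :: complex mat) \<in> carrier_mat n n"
  shows "eigenvalue H a \<longleftrightarrow> det (H - a \<cdot>\<^sub>m 1\<^sub>m n) = 0"
proof -
  have "char_matrix H a = H - a \<cdot>\<^sub>m 1\<^sub>m n" using H unfolding char_matrix_def
    by (intro eq_matI) auto
  thus ?thesis using eigenvalue_det[OF H] by simp
qed

lemma moreover_part: assumes H: "H \<in> carrier_mat n n" and k: "1 \<le> k"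
  and ec: "eig_conditions n H k lam"
  shows "{\<mu>. eigenvalue H \<mu>} = complex_of_real ` lam ` {1..k}"
proof -
  from ec obtain b y where inj: "inj_on lam {1..k}"
    and dets: "\<forall>i\<in>{2..k}. det (H - complex_of_real (lam i) \<cdot>\<^sub>m 1\<^sub>m n) = 0"
    and b: "b \<noteq> 0" and y: "y \<in> carrier_vec n" "y \<noteq> 0\<^sub>v n"
    and prod: "shifted_prod n H lam k = b \<cdot>\<^sub>m outer_adj y"
    and Hy: "H *\<^sub>v y = complex_of_real (lam 1) \<cdot>\<^sub>v y"
    unfolding eig_conditions_def by blast
  show ?thesis
  proof (intro equalityI subsetI)
    fix \<mu> assume "\<mu> \<in> {\<mu>. eigenvalue H \<mu>}"
    then obtain v where v: "v \<in> carrier_vec n" "v \<noteq> 0\<^sub>v n" and Hv: "H *\<^sub>v v = \<mu> \<cdot>\<^sub>v v"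
      using H unfolding eigenvalue_def eigenvector_def by auto
    show "\<mu> \<in> complex_of_real ` lam ` {1..k}"
    proof (rule ccontr)
      assume nin: "\<mu> \<notin> complex_of_real ` lam ` {1..k}"
      let ?c = "\<lambda>i. complex_of_real (lam i)"
      define p where "p = (\<Prod>i\<leftarrow>[2..<Suc k]. \<mu> - ?c i)"
      have "\<forall>i\<in>set [2..<Suc k]. \<mu> - ?c i \<noteq> 0"
      proof
        fix i assume "i \<in> set [2..<Suc k]"
        hence "i \<in> {1..k}" by auto
        hence "?c i \<in> complex_of_real ` lam ` {1..k}" by blast
        thus "\<mu> - ?c i \<noteq> 0" using nin by auto
      qed
      hence p: "p \<noteq> 0" unfolding p_def prod_list_zero_iff by auto
      have "p \<cdot>\<^sub>v v = shifted_prod n H lam k *\<^sub>v v"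
        unfolding shifted_prod_sp p_def by (rule sp_apply[OF H v(1) Hv, symmetric])
      also have "\<dots> = (b * (v \<bullet>c y)) \<cdot>\<^sub>v y" unfolding prod using y v
        by (simp add: outer_adj_apply smult_smult_assoc smult_mat_vec[OF outer_adj_carrier[OF y(1)]])
      finally have pv: "p \<cdot>\<^sub>v v = (b * (v \<bullet>c y)) \<cdot>\<^sub>v y" .
      have "(p * \<mu>) \<cdot>\<^sub>v v = p \<cdot>\<^sub>v (H *\<^sub>v v)" unfolding Hv by (simp add: smult_smult_assoc ac_simps)
      also have "\<dots> = H *\<^sub>v (p \<cdot>\<^sub>v v)" using H v by (simp add: mult_mat_vec)
      also have "\<dots> = (b * (v \<bullet>c y)) \<cdot>\<^sub>v (H *\<^sub>v y)" unfolding pv using H y by (simp add: mult_mat_vec)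
      also have "\<dots> = ?c 1 \<cdot>\<^sub>v ((b * (v \<bullet>c y)) \<cdot>\<^sub>v y)" unfolding Hy by (simp add: smult_smult_assoc ac_simps)
      also have "\<dots> = (p * ?c 1) \<cdot>\<^sub>v v" unfolding pv[symmetric] by (simp add: smult_smult_assoc ac_simps)
      finally have "p * \<mu> = p * ?c 1" using smult_vec_cancel[OF v] by blast
      hence "\<mu> = ?c 1" using p by simp
      moreover have "?c 1 \<in> complex_of_real ` lam ` {1..k}" using k by auto
      ultimately show False using nin by simp
    qed
  next
    fix \<mu> assume "\<mu> \<in> complex_of_real ` lam ` {1..k}"
    then obtain i where i: "i \<in> {1..k}" and mu: "\<mu> = complex_of_real (lam i)" by auto
    show "\<mu> \<in> {\<mu>. eigenvalue H \<mu>}"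
    proof (cases "i = 1")
      case True
      have "eigenvector H y (lam 1)" using y H Hy unfolding eigenvector_def by auto
      thus ?thesis using mu True unfolding eigenvalue_def by auto
    next
      case False
      hence "i \<in> {2..k}" using i by auto
      thus ?thesis using dets mu eigenvalue_shift[OF H] by auto
    qed
  qed
qed

lemma card_part: assumes "inj_on lam {1..k}"
  shows "card (complex_of_real ` lam ` {1..k}) = k"
proof -
  have i: "inj_on complex_of_real X" for X
    by (rule inj_onI) simp
  have "card (complex_of_real ` lam ` {1..k}) = card (lam ` {1..k})"
    by (rule card_image[OF i])
  also have "\<dots> = card {1..k}" by (rule card_image[OF assms])
  finally show ?thesis by simp
qed
lemma herm_ent_shift: assumes "herm_ent n H"
  shows "herm_ent n (H - complex_of_real r \<cdot>\<^sub>m 1\<^sub>m n)"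
  unfolding herm_ent_def
proof (intro conjI allI impI)
  have H: "H \<in> carrier_mat n n" by (rule herm_entC[OF assms])
  thus "H - complex_of_real r \<cdot>\<^sub>m 1\<^sub>m n \<in> carrier_mat n n" by (intro minus_carrier_mat) simp
  fix i j assume ij: "i < n" "j < n"
  have e: "H $$ (i,j) = cnj (H $$ (j,i))" by (rule herm_entD[OF assms ij])
  show "(H - complex_of_real r \<cdot>\<^sub>m 1\<^sub>m n) $$ (i, j) = cnj ((H - complex_of_real r \<cdot>\<^sub>m 1\<^sub>m n) $$ (j, i))"
    using H ij by (simp add: e)
qed

lemma char_matrix_shift: assumes H: "(H :: complex mat) \<in> carrier_mat n n"
  shows "char_matrix H a = H - a \<cdot>\<^sub>m 1\<^sub>m n"
  using H unfolding char_matrix_def by (intro eq_matI) auto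

lemma herm_sq_kernel: assumes A: "herm_ent n A" and v: "v \<in> carrier_vec n"
  and z: "A *\<^sub>v (A *\<^sub>v v) = 0\<^sub>v n"
  shows "A *\<^sub>v v = 0\<^sub>v n"
proof -
  have Ac: "A \<in> carrier_mat n n" by (rule herm_entC[OF A])
  have w: "A *\<^sub>v v \<in> carrier_vec n" using Ac v by simp
  have "(A *\<^sub>v v) \<bullet>c (A *\<^sub>v v) = v \<bullet>c (A *\<^sub>v (A *\<^sub>v v))" by (rule herm_sprod[OF A v w])
  also have "\<dots> = 0" unfolding z using v by simp
  finally show ?thesis using w by simp
qed

lemma kernel_sq: assumes A: "herm_ent n A"
  shows "mat_kernel (A ^\<^sub>m 2) = mat_kernel (A ^\<^sub>m 1)"
proof -
  have Ac: "A \<in> carrier_mat n n" by (rule herm_entC[OF A])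
  have p1: "A ^\<^sub>m 1 = A" using Ac by simp
  have p2: "A ^\<^sub>m 2 = A * A" using Ac by (simp add: numeral_2_eq_2)
  show ?thesis unfolding p1 p2
  proof (intro equalityI subsetI)
    fix v assume "v \<in> mat_kernel (A * A)"
    hence v: "v \<in> carrier_vec n" "(A * A) *\<^sub>v v = 0\<^sub>v n" using mat_kernelD[of "A * A" n n v] Ac by auto
    have "A *\<^sub>v (A *\<^sub>v v) = 0\<^sub>v n" using v Ac by simp
    hence "A *\<^sub>v v = 0\<^sub>v n" by (rule herm_sq_kernel[OF A v(1)])
    thus "v \<in> mat_kernel A" using v Ac by (intro mat_kernelI) auto
  next
    fix v assume "v \<in> mat_kernel A"
    thus "v \<in> mat_kernel (A * A)" using mat_kernel_mult_subset[OF Ac Ac] by auto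
  qed
qed

lemma kernel_dim_cong: "mat_kernel A = mat_kernel B \<Longrightarrow> dim_col A = dim_col B \<Longrightarrow> kernel_dim A = kernel_dim B"
  unfolding kernel_dim_def by simp

lemma sum_list_le_eq: fixes f g :: "'a \<Rightarrow> nat"
  assumes "\<forall>x\<in>set L. g x \<le> f x" "sum_list (map f L) = sum_list (map g L)" "x \<in> set L"
  shows "f x = g x"
  using assms
proof (induct L)
  case (Cons a L)
  have "sum_list (map g L) \<le> sum_list (map f L)" using Cons(2) by (intro sum_list_mono) auto
  with Cons(2,3) have "f a = g a" "sum_list (map f L) = sum_list (map g L)" by auto
  with Cons show ?case by auto
qed simp

lemma sum_list_ones: "\<forall>x\<in>set L. fst x = (1::nat) \<Longrightarrow> sum_list (map fst L) = length L"
  by (induct L) auto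

lemma jm_diag: "\<forall>x\<in>set n_as. fst x = (1::nat) \<Longrightarrow>
   jordan_matrix n_as = mat_diag (length n_as) (\<lambda>i. snd (n_as ! i))"
proof (induct n_as)
  case Nil
  show ?case by (intro eq_matI) (auto simp: mat_diag_def)
next
  case (Cons x n_as)
  obtain m a where x: "x = (m,a)" by force
  have m: "m = 1" using Cons(2) x by auto
  have N: "sum_list (map fst n_as) = length n_as" using Cons(2) by (intro sum_list_ones) auto
  have IH: "jordan_matrix n_as = mat_diag (length n_as) (\<lambda>i. snd (n_as ! i))" using Cons by auto
  show ?case unfolding x m jordan_matrix_Cons N IH
    by (intro eq_matI) (auto simp: mat_diag_def jordan_block_def nth_Cons')
qed

lemma PXQ_mult: assumes P: "(P :: complex mat) \<in> carrier_mat n n" and Q: "Q \<in> carrier_mat n n"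
  and X: "X \<in> carrier_mat n n" and Y: "Y \<in> carrier_mat n n" and QP: "Q * P = 1\<^sub>m n"
  shows "(P * X * Q) * (P * Y * Q) = P * (X * Y) * Q"
proof -
  have "(P * X * Q) * (P * Y * Q) = P * X * (Q * (P * Y * Q))"
    using P X Q Y by (simp add: assoc_mult_mat[of _ n n _ n _ n])
  also have "Q * (P * Y * Q) = (Q * P) * (Y * Q)"
    using P X Q Y by (simp add: assoc_mult_mat[of _ n n _ n _ n])
  also have "\<dots> = Y * Q" unfolding QP using mult_carrier_mat[OF Y Q] by (rule left_mult_one_mat)
  also have "P * X * (Y * Q) = P * (X * Y) * Q"
    using P X Q Y by (simp add: assoc_mult_mat[of _ n n _ n _ n])
  finally show ?thesis .
qed

lemma shift_sim: assumes P: "P \<in> carrier_mat n n" and Q: "Q \<in> carrier_mat n n"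
  and J: "J \<in> carrier_mat n n" and PQ: "P * Q = 1\<^sub>m n" and H: "H = P * J * Q"
  shows "H - (c::complex) \<cdot>\<^sub>m 1\<^sub>m n = P * (J - c \<cdot>\<^sub>m 1\<^sub>m n) * Q"
proof -
  have "P * (J - c \<cdot>\<^sub>m 1\<^sub>m n) = P * J - P * (c \<cdot>\<^sub>m 1\<^sub>m n)"
    using P J by (intro mult_minus_distrib_mat[of _ n n]) auto
  also have "P * (c \<cdot>\<^sub>m 1\<^sub>m n) = c \<cdot>\<^sub>m P" using P by (simp add: mult_smult_distrib[of _ n n _ n])
  finally have "P * (J - c \<cdot>\<^sub>m 1\<^sub>m n) * Q = (P * J - c \<cdot>\<^sub>m P) * Q" by simp
  also have "\<dots> = P * J * Q - (c \<cdot>\<^sub>m P) * Q"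
    using P J Q by (intro minus_mult_distrib_mat[of _ n n]) auto
  also have "(c \<cdot>\<^sub>m P) * Q = c \<cdot>\<^sub>m 1\<^sub>m n" using P Q PQ by (simp add: mult_smult_assoc_mat[of _ n n _ n])
  finally show ?thesis unfolding H by simp
qed

lemma sp_sim: assumes P: "P \<in> carrier_mat n n" and Q: "Q \<in> carrier_mat n n"
  and J: "J \<in> carrier_mat n n" and PQ: "P * Q = 1\<^sub>m n" and QP: "Q * P = 1\<^sub>m n"
  and H: "H = P * J * Q"
  shows "sp n H c xs = P * sp n J c xs * Q"
proof (induct xs)
  case Nil
  show ?case unfolding sp_Nil using P Q PQ by simp
next
  case (Cons a xs)
  have "sp n H c (a # xs) = (P * (J - c a \<cdot>\<^sub>m 1\<^sub>m n) * Q) * (P * sp n J c xs * Q)"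
    unfolding sp_Cons Cons shift_sim[OF P Q J PQ H] ..
  also have "\<dots> = P * sp n J c (a # xs) * Q" unfolding sp_Cons
    by (rule PXQ_mult[OF P Q _ sp_carrier[OF J] QP]) (insert J, auto intro: minus_carrier_mat)
  finally show ?case .
qed

lemma sp_diag: "sp n (mat_diag n d) c xs = mat_diag n (\<lambda>j. \<Prod>i\<leftarrow>xs. d j - c i)"
proof (induct xs)
  case Nil
  show ?case unfolding sp_Nil by simp
next
  case (Cons a xs)
  have "mat_diag n d - c a \<cdot>\<^sub>m 1\<^sub>m n = mat_diag n (\<lambda>j. d j - c a)"
    by (intro eq_matI) (auto simp: mat_diag_def)
  thus ?case unfolding sp_Cons Cons by simp
qed

lemma mat_diag_cong: "(\<And>j. j < n \<Longrightarrow> f j = g j) \<Longrightarrow> mat_diag n f = mat_diag n g"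
  by (intro eq_matI) (auto simp: mat_diag_def)

lemma PDQ_entries: assumes P: "P \<in> carrier_mat n n" and Q: "Q \<in> carrier_mat n n" and j0: "j0 < n"
  shows "P * mat_diag n (\<lambda>j. if j = j0 then cc else 0) * Q = mat n n (\<lambda>(i,l). P $$ (i,j0) * cc * Q $$ (j0,l))"
proof -
  have "P * mat_diag n (\<lambda>j. if j = j0 then cc else 0) = mat n n (\<lambda>(i,j). P $$ (i,j) * (if j = j0 then cc else 0))"
    by (rule mat_diag_mult_right[OF P])
  also have "\<dots> * Q = mat n n (\<lambda>(i,l). P $$ (i,j0) * cc * Q $$ (j0,l))"
  proof (intro eq_matI)
    fix i l assume il: "i < dim_row (mat n n (\<lambda>(i,l). P $$ (i,j0) * cc * Q $$ (j0,l)))"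
      "l < dim_col (mat n n (\<lambda>(i,l). P $$ (i,j0) * cc * Q $$ (j0,l)))"
    hence il: "i < n" "l < n" by auto
    have "(mat n n (\<lambda>(i,j). P $$ (i,j) * (if j = j0 then cc else 0)) * Q) $$ (i,l)
       = (\<Sum>ia = 0..<n. P $$ (i, ia) * (if ia = j0 then cc else 0) * Q $$ (ia, l))"
      using il Q by (auto simp: scalar_prod_def)
    also have "\<dots> = (\<Sum>j\<in>{0..<n}. (if j = j0 then P $$ (i,j0) * cc * Q $$ (j0,l) else 0))"
      by (intro sum.cong) auto
    also have "\<dots> = P $$ (i,j0) * cc * Q $$ (j0,l)" using j0 by simp
    finally show "(mat n n (\<lambda>(i,j). P $$ (i,j) * (if j = j0 then cc else 0)) * Q) $$ (i,l)
       = mat n n (\<lambda>(i,l). P $$ (i,j0) * cc * Q $$ (j0,l)) $$ (i,l)" using il by simp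
  qed (insert Q, auto)
  finally show ?thesis .
qed

lemma shift_comm: assumes H: "H \<in> carrier_mat n n"
  shows "(H - (c::complex) \<cdot>\<^sub>m 1\<^sub>m n) * H = H * (H - c \<cdot>\<^sub>m 1\<^sub>m n)"
proof -
  have "(H - c \<cdot>\<^sub>m 1\<^sub>m n) * H = H * H - (c \<cdot>\<^sub>m 1\<^sub>m n) * H"
    using H by (intro minus_mult_distrib_mat[of _ n n]) auto
  also have "(c \<cdot>\<^sub>m 1\<^sub>m n) * H = c \<cdot>\<^sub>m H" using H by (simp add: mult_smult_assoc_mat[of _ n n _ n])
  also have "c \<cdot>\<^sub>m H = H * (c \<cdot>\<^sub>m 1\<^sub>m n)" using H by (simp add: mult_smult_distrib[of _ n n _ n])
  also have "H * H - H * (c \<cdot>\<^sub>m 1\<^sub>m n) = H * (H - c \<cdot>\<^sub>m 1\<^sub>m n)"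
    using H by (intro mult_minus_distrib_mat[of _ n n, symmetric]) auto
  finally show ?thesis .
qed

lemma sp_comm: assumes H: "H \<in> carrier_mat n n"
  shows "sp n H c xs * H = H * sp n H c xs"
proof (induct xs)
  case Nil
  show ?case unfolding sp_Nil using H by simp
next
  case (Cons a xs)
  let ?A = "H - c a \<cdot>\<^sub>m 1\<^sub>m n"
  let ?S = "sp n H c xs"
  have A: "?A \<in> carrier_mat n n" using H by (intro minus_carrier_mat) auto
  have S: "?S \<in> carrier_mat n n" by (rule sp_carrier[OF H])
  have "(?A * ?S) * H = ?A * (?S * H)" using A S H by simp
  also have "\<dots> = ?A * (H * ?S)" unfolding Cons ..
  also have "\<dots> = (?A * H) * ?S" using A S H by simp
  also have "\<dots> = (H * ?A) * ?S" unfolding shift_comm[OF H] ..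
  also have "\<dots> = H * (?A * ?S)" using A S H by simp
  finally show ?case unfolding sp_Cons .
qed

lemma sp_comm_shift: assumes H: "H \<in> carrier_mat n n"
  shows "sp n H c xs * (H - (a::complex) \<cdot>\<^sub>m 1\<^sub>m n) = (H - a \<cdot>\<^sub>m 1\<^sub>m n) * sp n H c xs"
proof -
  let ?S = "sp n H c xs"
  have S: "?S \<in> carrier_mat n n" by (rule sp_carrier[OF H])
  have "?S * (H - a \<cdot>\<^sub>m 1\<^sub>m n) = ?S * H - ?S * (a \<cdot>\<^sub>m 1\<^sub>m n)"
    using H S by (intro mult_minus_distrib_mat[of _ n n]) auto
  also have "?S * (a \<cdot>\<^sub>m 1\<^sub>m n) = a \<cdot>\<^sub>m ?S" using S by (simp add: mult_smult_distrib[of _ n n _ n])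
  also have "a \<cdot>\<^sub>m ?S = (a \<cdot>\<^sub>m 1\<^sub>m n) * ?S" using S by (simp add: mult_smult_assoc_mat[of _ n n _ n])
  also have "?S * H = H * ?S" by (rule sp_comm[OF H])
  also have "H * ?S - (a \<cdot>\<^sub>m 1\<^sub>m n) * ?S = (H - a \<cdot>\<^sub>m 1\<^sub>m n) * ?S"
    using H S by (intro minus_mult_distrib_mat[of _ n n, symmetric]) auto
  finally show ?thesis .
qed

lemma sp_sa: assumes H: "herm_ent n H" and x: "x \<in> carrier_vec n" and z: "z \<in> carrier_vec n"
  shows "(sp n H (\<lambda>i. complex_of_real (r i)) xs *\<^sub>v x) \<bullet>c z = x \<bullet>c (sp n H (\<lambda>i. complex_of_real (r i)) xs *\<^sub>v z)"
  using x z
proof (induct xs arbitrary: x z)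
  case Nil
  thus ?case unfolding sp_Nil by simp
next
  case (Cons a xs x z)
  have Hc: "H \<in> carrier_mat n n" by (rule herm_entC[OF H])
  let ?c = "\<lambda>i. complex_of_real (r i)"
  let ?A = "H - ?c a \<cdot>\<^sub>m 1\<^sub>m n"
  let ?S = "sp n H ?c xs"
  have A: "?A \<in> carrier_mat n n" using Hc by (intro minus_carrier_mat) auto
  have Ah: "herm_ent n ?A" by (rule herm_ent_shift[OF H])
  have S: "?S \<in> carrier_mat n n" by (rule sp_carrier[OF Hc])
  have "((?A * ?S) *\<^sub>v x) \<bullet>c z = (?A *\<^sub>v (?S *\<^sub>v x)) \<bullet>c z" using A S Cons by simp
  also have "\<dots> = (?S *\<^sub>v x) \<bullet>c (?A *\<^sub>v z)" using S Cons A by (intro herm_sprod[OF Ah]) auto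
  also have "\<dots> = x \<bullet>c (?S *\<^sub>v (?A *\<^sub>v z))" using Cons A by (intro Cons(1)) auto
  also have "?S *\<^sub>v (?A *\<^sub>v z) = (?S * ?A) *\<^sub>v z" using A S Cons by simp
  also have "?S * ?A = ?A * ?S" by (rule sp_comm_shift[OF Hc])
  finally show ?case unfolding sp_Cons .
qed

lemma conj_unit_vec: "conjugate (unit_vec n i :: complex vec) = unit_vec n i"
  by (intro eq_vecI) (auto simp: unit_vec_def)

lemma herm_from_sa: assumes M: "M \<in> carrier_mat n n"
  and sa: "\<And>x z. x \<in> carrier_vec n \<Longrightarrow> z \<in> carrier_vec n \<Longrightarrow> (M *\<^sub>v x) \<bullet>c z = x \<bullet>c (M *\<^sub>v z)"
  shows "herm_ent n (M :: complex mat)"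
  unfolding herm_ent_def
proof (intro conjI allI impI)
  show "M \<in> carrier_mat n n" by fact
  fix i j assume ij: "i < n" "j < n"
  have "M $$ (i,j) = (M *\<^sub>v unit_vec n j) \<bullet>c unit_vec n i"
    using M ij by (simp add: conj_unit_vec scalar_prod_right_unit)
  also have "\<dots> = unit_vec n j \<bullet>c (M *\<^sub>v unit_vec n i)" by (rule sa) auto
  also have "\<dots> = cnj (M $$ (j,i))"
    using M ij by (simp add: scalar_prod_left_unit)
  finally show "M $$ (i,j) = cnj (M $$ (j,i))" .
qed

lemma eigenvalue_of_block: assumes H: "(H::complex mat) \<in> carrier_mat n n" and jnf: "jordan_nf H n_as"
  and x: "x \<in> set n_as"
  shows "eigenvalue H (snd x)"
proof -
  obtain m a where xa: "x = (m,a)" by force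
  have m0: "m \<noteq> 0" using jnf x xa unfolding jordan_nf_def by force
  have "m \<le> order a (char_poly H)" using jordan_nf_block_size_order_bound[OF jnf] x xa by auto
  hence "order a (char_poly H) \<noteq> 0" using m0 by auto
  hence "poly (char_poly H) a = 0" using order_root by blast
  thus ?thesis using eigenvalue_root_char_poly[OF H] xa by simp
qed

lemma blocks_one: assumes herm: "hermitian_mat n H" and jnf: "jordan_nf H n_as"
  shows "\<forall>x\<in>set n_as. fst x = 1"
proof
  fix x assume x: "x \<in> set n_as"
  obtain m a where xa: "x = (m,a)" by force
  have H: "H \<in> carrier_mat n n" using herm unfolding hermitian_mat_def by blast
  have m0: "m \<noteq> 0" using jnf x xa unfolding jordan_nf_def by force
  have ev: "eigenvalue H a" using eigenvalue_of_block[OF H jnf x] xa by simp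
  have ar: "a = complex_of_real (Re a)" by (rule herm_eigenvalue_real[OF herm ev])
  let ?A = "char_matrix H a"
  have Aeq: "?A = H - complex_of_real (Re a) \<cdot>\<^sub>m 1\<^sub>m n" using char_matrix_shift[OF H, of a] ar by simp
  have Ah: "herm_ent n ?A" unfolding Aeq by (rule herm_ent_shift[OF herm_ent_herm[OF herm]])
  have Ac: "?A \<in> carrier_mat n n" using H by simp
  have "kernel_dim (?A ^\<^sub>m 2) = kernel_dim (?A ^\<^sub>m 1)"
    by (rule kernel_dim_cong[OF kernel_sq[OF Ah]]) (use Ac in simp)
  hence dge: "dim_gen_eigenspace H a 2 = dim_gen_eigenspace H a 1" unfolding dim_gen_eigenspace_def .
  define L where "L = map fst (filter (\<lambda>(n, e). e = a) n_as)"
  have dg: "dim_gen_eigenspace H a k = sum_list (map (min k) L)" for k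
    unfolding L_def by (rule dim_gen_eigenspace[OF jnf])
  have eq: "sum_list (map (min 2) L) = sum_list (map (min 1) L)" using dge unfolding dg .
  have mL: "m \<in> set L" unfolding L_def using x xa by force
  have "min 2 m = min 1 m" by (rule sum_list_le_eq[where f = "min 2" and g = "min 1", OF _ eq mL]) auto
  thus "fst x = 1" using m0 xa by auto
qed

lemma forward: assumes herm: "hermitian_mat n H" and les: "largest_eigenvalue_simple H"
  and k2: "2 \<le> k" and card: "card {\<mu>. eigenvalue H \<mu>} = k"
  shows "\<exists>lam. eig_conditions n H k lam"
proof -
  have H: "H \<in> carrier_mat n n" using herm unfolding hermitian_mat_def by blast
  obtain r where r_ev: "eigenvalue H (complex_of_real r)"
    and r_ord: "order (complex_of_real r) (char_poly H) = 1"
    using les unfolding largest_eigenvalue_simple_def by blast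
  obtain as where "char_poly H = (\<Prod>a\<leftarrow>as. [:- a, 1:])" using char_poly_factorized[OF H] by blast
  then obtain n_as where jnf: "jordan_nf H n_as" using jordan_nf_exists[OF H] by blast
  have ones: "\<forall>x\<in>set n_as. fst x = 1" by (rule blocks_one[OF herm jnf])
  define N where "N = length n_as"
  define d where "d = (\<lambda>i. snd (n_as ! i))"
  have J: "jordan_matrix n_as = mat_diag N d" unfolding N_def d_def by (rule jm_diag[OF ones])
  obtain P Q where wit: "similar_mat_wit H (mat_diag N d) P Q"
    using jnf unfolding jordan_nf_def similar_mat_def J by blast
  have dimH: "n = dim_row H" using H by simp
  note wD = similar_mat_witD[OF dimH wit]
  have Nn: "N = n" using wD(5) by (metis carrier_matD(1) mat_diag_dim)
  have PQ: "P * Q = 1\<^sub>m n" and QP: "Q * P = 1\<^sub>m n" and HPDQ: "H = P * mat_diag n d * Q"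
    and P: "P \<in> carrier_mat n n" and Q: "Q \<in> carrier_mat n n"
    using wD(1) wD(2) wD(3) wD(6) wD(7) unfolding Nn by blast+
  have dev: "eigenvalue H (d j)" if "j < n" for j
  proof -
    have "length n_as = n" using Nn unfolding N_def .
    hence "n_as ! j \<in> set n_as" using that by simp
    thus ?thesis using eigenvalue_of_block[OF H jnf, of "n_as ! j"] unfolding d_def by simp
  qed
  have "order (complex_of_real r) (char_poly H)
      = sum_list (map fst (filter (\<lambda>na. snd na = complex_of_real r) n_as))"
    by (rule jordan_nf_order[OF jnf])
  also have "\<dots> = length (filter (\<lambda>na. snd na = complex_of_real r) n_as)"
    using ones by (intro sum_list_ones) auto
  also have "\<dots> = card {i. i < n \<and> d i = complex_of_real r}"
    unfolding length_filter_conv_card d_def N_def[symmetric] Nn ..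
  finally have "card {i. i < n \<and> d i = complex_of_real r} = Suc 0" using r_ord by simp
  then obtain j0 where j0s: "{i. i < n \<and> d i = complex_of_real r} = {j0}"
    unfolding card_1_singleton_iff by blast
  hence j0: "j0 < n" "d j0 = complex_of_real r" and j0u: "\<And>j. j < n \<Longrightarrow> d j = complex_of_real r \<Longrightarrow> j = j0"
    by auto
  define E where "E = {\<mu>. eigenvalue H \<mu>}"
  have finE: "finite E" using card k2 unfolding E_def by (metis card.infinite not_numeral_le_zero)
  have rE: "complex_of_real r \<in> E" using r_ev unfolding E_def by simp
  define S where "S = E - {complex_of_real r}"
  have finS: "finite S" using finE unfolding S_def by simp
  have cardS: "card S = k - 1" unfolding S_def using card rE finE unfolding E_def[symmetric] by simp
  obtain g where g: "bij_betw g {0..<k-1} S" using ex_bij_betw_nat_finite[OF finS] unfolding cardS by blast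
  define lam where "lam = (\<lambda>i. if i = 1 then r else Re (g (i - 2)))"
  let ?c = "\<lambda>i. complex_of_real (lam i)"
  have gS: "g (i - 2) \<in> S" if "i \<in> {2..k}" for i
    using bij_betw_apply[OF g] that by auto
  have lamc: "?c i = g (i - 2)" if i: "i \<in> {2..k}" for i
  proof -
    have "g (i - 2) \<in> E" using gS[OF i] unfolding S_def by auto
    hence "g (i - 2) = complex_of_real (Re (g (i - 2)))"
      unfolding E_def by (intro herm_eigenvalue_real[OF herm]) auto
    thus ?thesis using i unfolding lam_def by auto
  qed
  have lam_ne: "?c i \<noteq> complex_of_real r" if i: "i \<in> {2..k}" for i
    using gS[OF i] lamc[OF i] unfolding S_def by auto
  have lam1: "lam 1 = r" unfolding lam_def by simp
  have inj: "inj_on lam {1..k}"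
  proof (rule inj_onI)
    fix i j assume i: "i \<in> {1..k}" and j: "j \<in> {1..k}" and eq: "lam i = lam j"
    show "i = j"
    proof (cases "i = 1")
      case True
      show ?thesis
      proof (rule ccontr)
        assume "i \<noteq> j"
        hence "j \<in> {2..k}" using True j by auto
        thus False using lam_ne eq True lam1 by metis
      qed
    next
      case False
      hence i2: "i \<in> {2..k}" using i by auto
      show ?thesis
      proof (cases "j = 1")
        case True
        thus ?thesis using lam_ne[OF i2] eq lam1 by metis
      next
        case False
        hence j2: "j \<in> {2..k}" using j by auto
        have "g (i - 2) = g (j - 2)" using lamc[OF i2] lamc[OF j2] eq by metis
        hence "i - 2 = j - 2" using bij_betw_imp_inj_on[OF g] i2 j2 unfolding inj_on_def by auto
        thus ?thesis using i2 j2 by auto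
      qed
    qed
  qed
  have dets: "\<forall>i\<in>{2..k}. det (H - ?c i \<cdot>\<^sub>m 1\<^sub>m n) = 0"
  proof
    fix i assume i: "i \<in> {2..k}"
    have "eigenvalue H (?c i)" using gS[OF i] lamc[OF i] unfolding S_def E_def by auto
    thus "det (H - ?c i \<cdot>\<^sub>m 1\<^sub>m n) = 0" using eigenvalue_shift[OF H] by blast
  qed
  define xs where "xs = [2..<Suc k]"
  have xs_set: "set xs = {2..k}" unfolding xs_def by auto
  define cc where "cc = (\<Prod>i\<leftarrow>xs. complex_of_real r - ?c i)"
  have ccf: "\<forall>i\<in>set xs. complex_of_real r - ?c i \<noteq> 0"
  proof
    fix i assume "i \<in> set xs"
    hence "i \<in> {2..k}" using xs_set by simp
    from lam_ne[OF this] show "complex_of_real r - ?c i \<noteq> 0" by simp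
  qed
  have cc: "cc \<noteq> 0" unfolding cc_def prod_list_zero_iff using ccf by auto
  have diag: "(\<Prod>i\<leftarrow>xs. d j - ?c i) = (if j = j0 then cc else 0)" if j: "j < n" for j
  proof (cases "j = j0")
    case True
    thus ?thesis unfolding cc_def using j0 by simp
  next
    case False
    hence "d j \<noteq> complex_of_real r" using j0u j by blast
    hence "d j \<in> S" using dev[OF j] unfolding S_def E_def by auto
    then obtain t where t: "t \<in> {0..<k-1}" "g t = d j"
      using bij_betw_imp_surj_on[OF g] by (metis imageE)
    have ti: "t + 2 \<in> {2..k}" using t k2 by auto
    have "?c (t + 2) = d j" using lamc[OF ti] t by simp
    hence z: "d j - ?c (t + 2) = 0" by simp
    have mem: "t + 2 \<in> set xs" using ti xs_set by simp
    have "d j - ?c (t + 2) \<in> set (map (\<lambda>i. d j - ?c i) xs)"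
      using mem by (intro list.set_map[THEN equalityD2, THEN subsetD] imageI)
    hence "0 \<in> set (map (\<lambda>i. d j - ?c i) xs)" unfolding z .
    thus ?thesis using False by (simp add: prod_list_zero_iff)
  qed
  define M where "M = shifted_prod n H lam k"
  have "M = sp n H ?c xs" unfolding M_def xs_def by (rule shifted_prod_sp)
  also have "\<dots> = P * sp n (mat_diag n d) ?c xs * Q" by (rule sp_sim[OF P Q _ PQ QP HPDQ]) simp
  also have "sp n (mat_diag n d) ?c xs = mat_diag n (\<lambda>j. if j = j0 then cc else 0)"
    unfolding sp_diag by (rule mat_diag_cong) (rule diag)
  also have "P * \<dots> * Q = mat n n (\<lambda>(i,l). P $$ (i,j0) * cc * Q $$ (j0,l))"
    by (rule PDQ_entries[OF P Q j0(1)])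
  finally have Mform: "M = mat n n (\<lambda>(i,l). P $$ (i,j0) * cc * Q $$ (j0,l))" .
  have Mh: "herm_ent n M" unfolding M_def shifted_prod_sp
    by (rule herm_from_sa[OF sp_carrier[OF H]], rule sp_sa[OF herm_ent_herm[OF herm]])
  define U where "U = (\<lambda>i. P $$ (i,j0))"
  define W where "W = (\<lambda>l. Q $$ (j0,l))"
  have Ment: "M $$ (i,l) = U i * cc * W l" if "i < n" "l < n" for i l
    unfolding Mform U_def W_def using that by simp
  have sum1: "(\<Sum>l\<in>{0..<n}. W l * U l) = 1"
  proof -
    have "(Q * P) $$ (j0,j0) = 1" unfolding QP using j0 by simp
    thus ?thesis using P Q j0 unfolding U_def W_def by (simp add: scalar_prod_def)
  qed
  obtain i0 where i0: "i0 < n" "U i0 \<noteq> 0"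
  proof (rule ccontr)
    assume "\<not> thesis"
    hence "\<forall>i<n. U i = 0" using that by blast
    hence "(\<Sum>l\<in>{0..<n}. W l * U l) = 0" by simp
    thus False using sum1 by simp
  qed
  have hermM: "U i * cc * W l = cnj (U l * cc * W i)" if "i < n" "l < n" for i l
    using herm_entD[OF Mh that] Ment that by simp
  define \<beta> where "\<beta> = cnj (cc * W i0) / U i0"
  have Wl: "cc * W l = cnj (U l) * \<beta>" if l: "l < n" for l
  proof -
    have "U i0 * (cc * W l) = cnj (U l) * cnj (cc * W i0)" using hermM[OF i0(1) l] by (simp add: ac_simps)
    thus ?thesis unfolding \<beta>_def using i0(2) by (simp add: field_simps)
  qed
  have \<beta>: "\<beta> \<noteq> 0"
  proof
    assume "\<beta> = 0"
    hence "\<forall>l<n. W l = 0" using Wl cc by simp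
    hence "(\<Sum>l\<in>{0..<n}. W l * U l) = 0" by simp
    thus False using sum1 by simp
  qed
  define y where "y = col P j0"
  have y: "y \<in> carrier_vec n" unfolding y_def using P by (intro carrier_vecI) simp
  have yi: "y $ i = U i" if "i < n" for i unfolding y_def U_def using P that j0(1) by simp
  have y0: "y \<noteq> 0\<^sub>v n"
  proof
    assume "y = 0\<^sub>v n"
    hence "y $ i0 = 0" using i0 by simp
    thus False using yi[OF i0(1)] i0(2) by simp
  qed
  have HP: "H * P = P * mat_diag n d"
  proof -
    have "H * P = P * mat_diag n d * (Q * P)" unfolding HPDQ
      by (rule assoc_mult_mat[of _ n n _ n _ n]) (use P Q in auto)
    also have "\<dots> = P * mat_diag n d" unfolding QP
      using mult_carrier_mat[OF P mat_diag_dim[of n d]] by (rule right_mult_one_mat)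
    finally show ?thesis .
  qed
  have Hy: "H *\<^sub>v y = ?c 1 \<cdot>\<^sub>v y"
  proof -
    have "H *\<^sub>v y = col (H * P) j0" unfolding y_def by (rule col_mult2[OF H P j0(1), symmetric])
    also have "\<dots> = col (P * mat_diag n d) j0" unfolding HP ..
    also have "\<dots> = ?c 1 \<cdot>\<^sub>v y" unfolding mat_diag_mult_right[OF P] y_def lam1
      using P j0 by (intro eq_vecI) auto
    finally show ?thesis .
  qed
  have Mb: "M = \<beta> \<cdot>\<^sub>m outer_adj y"
  proof (rule eq_matI)
    fix i l assume "i < dim_row (\<beta> \<cdot>\<^sub>m outer_adj y)" "l < dim_col (\<beta> \<cdot>\<^sub>m outer_adj y)"
    hence il: "i < n" "l < n" using y by (auto simp: outer_adj_def)
    have "M $$ (i,l) = U i * (cc * W l)" using Ment[OF il] by (simp add: ac_simps)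
    also have "\<dots> = U i * (cnj (U l) * \<beta>)" using Wl[OF il(2)] by simp
    also have "\<dots> = (\<beta> \<cdot>\<^sub>m outer_adj y) $$ (i,l)" using il y yi by (simp add: outer_adj_def)
    finally show "M $$ (i,l) = (\<beta> \<cdot>\<^sub>m outer_adj y) $$ (i,l)" .
  qed (insert y, auto simp: Mform outer_adj_def)
  show ?thesis unfolding eig_conditions_def
    using inj dets \<beta> y y0 Mb Hy unfolding M_def by blast
qed

theorem theorem2p6:
  fixes n k :: nat and H :: "complex mat"
  assumes "hermitian_mat n H"
    and "largest_eigenvalue_simple H"
    and "2 \<le> k" and "k \<le> n"
  shows "(card {\<mu>. eigenvalue H \<mu>} = k \<longleftrightarrow> (\<exists>lam. eig_conditions n H k lam))
    \<and> (\<forall>lam. eig_conditions n H k lam \<longrightarrow>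
          {\<mu>. eigenvalue H \<mu>} = complex_of_real ` lam ` {1..k})"
proof -
  have H: "H \<in> carrier_mat n n" using assms(1) unfolding hermitian_mat_def by blast
  have k1: "1 \<le> k" using assms(3) by simp
  have mo: "\<forall>lam. eig_conditions n H k lam \<longrightarrow>
          {\<mu>. eigenvalue H \<mu>} = complex_of_real ` lam ` {1..k}"
    using moreover_part[OF H k1] by blast
  have "card {\<mu>. eigenvalue H \<mu>} = k \<longleftrightarrow> (\<exists>lam. eig_conditions n H k lam)"
  proof
    assume "card {\<mu>. eigenvalue H \<mu>} = k"
    thus "\<exists>lam. eig_conditions n H k lam" by (rule forward[OF assms(1) assms(2) assms(3)])
  next
    assume "\<exists>lam. eig_conditions n H k lam"
    then obtain lam where ec: "eig_conditions n H k lam" by blast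
    hence inj: "inj_on lam {1..k}" unfolding eig_conditions_def by blast
    have "{\<mu>. eigenvalue H \<mu>} = complex_of_real ` lam ` {1..k}" using mo ec by blast
    thus "card {\<mu>. eigenvalue H \<mu>} = k" using card_part[OF inj] by simp
  qed
  with mo show ?thesis by blast
qed

end
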